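(* Let $H=\{H_a\}_{a\in\alpha}$ be an $\alpha$-family of subgroups of $\pi$. If two nanowords over $\alpha$ are homotopic, then their $H$-coverings are homotopic.
   Context: Fix a set $\alpha$ with an involution $\tau$. An $\alpha$-alphabet is a set $\mathcal A$ with a map $A\mapsto|A|\in\alpha$. A nanoword over $\alpha$ is a pair $(\mathcal A,w)$ with $\mathcal A$ a finite $\alpha$-alphabet and $w$ a word in which each letter occurs exactly twice. Nanowords are isomorphic if a bijection of alphabets preserving $|\cdot|$ carries one word letterwise to the other. Homotopy moves ($x,y,z,t$ words in the remaining letters; smaller alphabets carry the restricted projection): (1) $(\mathcal A,xAAy)\mapsto(\mathcal A\setminus\{A\},xy)$; (2) $(\mathcal A,xAByBAz)\mapsto(\mathcal A\setminus\{A,B\},xyz)$ if $|B|=\tau(|A|)$; (3) $(\mathcal A,xAByACzBCt)\mapsto(\mathcal A,xBAyCAzCBt)$ if $A,B,C$ distinct with $|A|=|B|=|C|$. Homotopy is generated by isomorphisms, these moves and their inverses. Let $\pi$ be the multiplicative abelian group generated by the elements of $\alpha$ with relations $a\,\tau(a)=1$. For $A,B\in\mathcal A$ let $n_w(A,B)=1$ if $w=\cdots A\cdots B\cdots A\cdots B\cdots$, $-1$ if $w=\cdots B\cdots A\cdots B\cdots A\cdots$, and $0$ otherwise, and $[A]_w=\prod_{B\in\mathcal A}|B|^{n_w(A,B)}\in\pi$. An $\alpha$-family of subgroups of $\pi$ is a family $\{H_a\subset\pi\}_{a\in\alpha}$ of subgroups with $H_a=H_{\tau(a)}$ for all $a$.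 The $H$-covering of $(\mathcal A,w)$ is the nanoword $(\mathcal A^H,w^H)$ obtained by deleting from both $\mathcal A$ and $w$ all letters $A$ with $[A]_w\notin H_{|A|}$. *)

theory Defs
  imports "HOL-Algebra.Free_Abelian_Groups" "HOL-Algebra.Generated_Groups" "HOL-Algebra.Coset"
begin

text \<open>pi is the abelian group generated by alpha subject to a * tau(a) = 1,
  realised as the quotient of the free abelian group on alpha (type 'a) by the
  subgroup generated by the elements a + tau(a) (additive notation in frags).\<close>

definition rel_subgroup :: "('a \<Rightarrow> 'a) \<Rightarrow> ('a \<Rightarrow>\<^sub>0 int) set" where
  "rel_subgroup \<tau> = generate (free_Abelian_group UNIV) {frag_of a + frag_of (\<tau> a) | a. True}"

definition pi_group :: "('a \<Rightarrow> 'a) \<Rightarrow> ('a \<Rightarrow>\<^sub>0 int) set monoid" where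
  "pi_group \<tau> = free_Abelian_group UNIV Mod rel_subgroup \<tau>"

definition pi_class :: "('a \<Rightarrow> 'a) \<Rightarrow> ('a \<Rightarrow>\<^sub>0 int) \<Rightarrow> ('a \<Rightarrow>\<^sub>0 int) set" where
  "pi_class \<tau> c = rel_subgroup \<tau> #>\<^bsub>free_Abelian_group UNIV\<^esub> c"

definition alpha_family :: "('a \<Rightarrow> 'a) \<Rightarrow> ('a \<Rightarrow> ('a \<Rightarrow>\<^sub>0 int) set set) \<Rightarrow> bool" where
  "alpha_family \<tau> H \<longleftrightarrow> (\<forall>a. subgroup (H a) (pi_group \<tau>) \<and> H a = H (\<tau> a))"

text \<open>A nanoword over alpha is a triple (A, p, w): a finite alphabet A (a set of
  letters of type 'b), the projection p (only its values on A matter), and a word w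
  in which each letter of A occurs exactly twice and no other letter occurs.\<close>

type_synonym ('b, 'a) nanoword = "'b set \<times> ('b \<Rightarrow> 'a) \<times> 'b list"

definition is_nanoword :: "('b, 'a) nanoword \<Rightarrow> bool" where
  "is_nanoword N = (case N of (A, p, w) \<Rightarrow>
      finite A \<and> set w \<subseteq> A \<and> (\<forall>X\<in>A. count_list w X = 2))"

definition nano_iso :: "('b, 'a) nanoword \<Rightarrow> ('b, 'a) nanoword \<Rightarrow> bool" where
  "nano_iso N M = (case N of (A, p, w) \<Rightarrow> case M of (A', p', w') \<Rightarrow>
      (\<exists>f. bij_betw f A A' \<and> (\<forall>X\<in>A. p' (f X) = p X) \<and> w' = map f w))"

inductive homotopy_move :: "('a \<Rightarrow> 'a) \<Rightarrow> ('b, 'a) nanoword \<Rightarrow> ('b, 'a) nanoword \<Rightarrow> bool"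
  for \<tau> :: "'a \<Rightarrow> 'a" where
  move1: "homotopy_move \<tau> (A, p, x @ [X, X] @ y) (A - {X}, p, x @ y)"
| move2: "p Y = \<tau> (p X) \<Longrightarrow>
    homotopy_move \<tau> (A, p, x @ [X, Y] @ y @ [Y, X] @ z) (A - {X, Y}, p, x @ y @ z)"
| move3: "distinct [X, Y, Z] \<Longrightarrow> p X = p Y \<Longrightarrow> p Y = p Z \<Longrightarrow>
    homotopy_move \<tau> (A, p, x @ [X, Y] @ y @ [X, Z] @ z @ [Y, Z] @ t)
                    (A, p, x @ [Y, X] @ y @ [Z, X] @ z @ [Z, Y] @ t)"

definition homotopy_step :: "('a \<Rightarrow> 'a) \<Rightarrow> ('b, 'a) nanoword \<Rightarrow> ('b, 'a) nanoword \<Rightarrow> bool" where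
  "homotopy_step \<tau> N M \<longleftrightarrow> is_nanoword N \<and> is_nanoword M \<and> (nano_iso N M \<or> homotopy_move \<tau> N M)"

definition homotopic :: "('a \<Rightarrow> 'a) \<Rightarrow> ('b, 'a) nanoword \<Rightarrow> ('b, 'a) nanoword \<Rightarrow> bool" where
  "homotopic \<tau> N M \<longleftrightarrow> (N, M) \<in> ({(P, Q). homotopy_step \<tau> P Q} \<union> {(P, Q). homotopy_step \<tau> Q P})\<^sup>*"

definition n_w :: "'b list \<Rightarrow> 'b \<Rightarrow> 'b \<Rightarrow> int" where
  "n_w w X Y =
    (if \<exists>x y z t u. w = x @ [X] @ y @ [Y] @ z @ [X] @ t @ [Y] @ u then 1
     else if \<exists>x y z t u. w = x @ [Y] @ y @ [X] @ z @ [Y] @ t @ [X] @ u then -1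
     else 0)"

text \<open>[X]_w = prod_{Y in A} |Y|^{n_w(X,Y)}, computed in the free abelian group and mapped to pi.\<close>
definition letter_class :: "('a \<Rightarrow> 'a) \<Rightarrow> ('b, 'a) nanoword \<Rightarrow> 'b \<Rightarrow> ('a \<Rightarrow>\<^sub>0 int) set" where
  "letter_class \<tau> N X = (case N of (A, p, w) \<Rightarrow>
      pi_class \<tau> (\<Sum>Y\<in>A. frag_cmul (n_w w X Y) (frag_of (p Y))))"

definition covering :: "('a \<Rightarrow> 'a) \<Rightarrow> ('a \<Rightarrow> ('a \<Rightarrow>\<^sub>0 int) set set) \<Rightarrow> ('b, 'a) nanoword \<Rightarrow> ('b, 'a) nanoword" where
  "covering \<tau> H N = (case N of (A, p, w) \<Rightarrow>
      let AH = {X \<in> A. letter_class \<tau> N X \<in> H (p X)} in (AH, p, filter (\<lambda>X. X \<in> AH) w))"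

end

theory Submission
  imports Defs "HOL-Library.Sublist"
begin


abbreviation FAG :: "('a \<Rightarrow>\<^sub>0 int) monoid" where "FAG \<equiv> free_Abelian_group UNIV"

lemma rel_subgroup_sub: "subgroup (rel_subgroup \<tau>) FAG"
  unfolding rel_subgroup_def
  by (rule group.generate_is_subgroup) auto

lemma rel_subgroup_normal: "rel_subgroup \<tau> \<lhd> FAG"
  using comm_group.subgroup_imp_normal[OF abelian_free_Abelian_group rel_subgroup_sub] .

lemma pi_group_group: "group (pi_group \<tau>)"
  unfolding pi_group_def using normal.factorgroup_is_group[OF rel_subgroup_normal] .

lemma pi_class_carrier: "pi_class \<tau> c \<in> carrier (pi_group \<tau>)"
  unfolding pi_group_def pi_class_def FactGroup_def RCOSETS_def by auto

lemma pi_class_add: "pi_class \<tau> (c + d) = pi_class \<tau> c \<otimes>\<^bsub>pi_group \<tau>\<^esub> pi_class \<tau> d"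
  unfolding pi_group_def pi_class_def FactGroup_def
  using normal.rcos_sum[OF rel_subgroup_normal, of c d] by simp

lemma pi_class_zero: "pi_class \<tau> 0 = \<one>\<^bsub>pi_group \<tau>\<^esub>"
  unfolding pi_group_def pi_class_def
  using group.coset_mult_one[OF group_free_Abelian_group, of "rel_subgroup \<tau>" UNIV]
    subgroup.subset[OF rel_subgroup_sub[of \<tau>]] by simp

lemma rel_mem: "frag_of a + frag_of (\<tau> a) \<in> rel_subgroup \<tau>"
  unfolding rel_subgroup_def by (rule generate.incl) auto

lemma pi_class_rel: "g \<in> rel_subgroup \<tau> \<Longrightarrow> pi_class \<tau> (g + c) = pi_class \<tau> c"
proof -
  assume g: "g \<in> rel_subgroup \<tau>"
  have "rel_subgroup \<tau> #>\<^bsub>FAG\<^esub> (g \<otimes>\<^bsub>FAG\<^esub> c) = (rel_subgroup \<tau> #>\<^bsub>FAG\<^esub> g) #>\<^bsub>FAG\<^esub> c"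
    using group.coset_mult_assoc[OF group_free_Abelian_group, of "rel_subgroup \<tau>" UNIV g c]
      subgroup.subset[OF rel_subgroup_sub[of \<tau>]] by simp
  also have "rel_subgroup \<tau> #>\<^bsub>FAG\<^esub> g = rel_subgroup \<tau>"
    using subgroup.rcos_const[OF rel_subgroup_sub group_free_Abelian_group g] .
  finally show ?thesis unfolding pi_class_def by simp
qed

lemma rel_mem_cmul:
  assumes "n \<in> {-1, 0, 1}"
  shows "frag_cmul n (frag_of a + frag_of (\<tau> a)) \<in> rel_subgroup \<tau>"
proof -
  have "- (frag_of a + frag_of (\<tau> a)) \<in> rel_subgroup \<tau>"
    using subgroup.m_inv_closed[OF rel_subgroup_sub rel_mem, of a \<tau>] by simp
  moreover have "(0::'a \<Rightarrow>\<^sub>0 int) \<in> rel_subgroup \<tau>"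
    using subgroup.one_closed[OF rel_subgroup_sub, of \<tau>] by simp
  ultimately show ?thesis using assms rel_mem[of a \<tau>] by auto
qed



lemma subseq_Cons_split: "subseq (a#xs) w \<longleftrightarrow> (\<exists>u v. w = u @ a # v \<and> subseq xs v)"
proof
  assume "subseq (a#xs) w" then show "\<exists>u v. w = u @ a # v \<and> subseq xs v"
    using list_emb_ConsD by fastforce
next
  assume "\<exists>u v. w = u @ a # v \<and> subseq xs v"
  then show "subseq (a#xs) w" by (auto intro: subseq_drop_many)
qed

lemma n_w_subseq: "n_w w X Y = (if subseq [X,Y,X,Y] w then 1 else if subseq [Y,X,Y,X] w then -1 else 0)"
proof -
  have e: "(\<exists>x y z t u. w = x @ [A] @ y @ [B] @ z @ [A] @ t @ [B] @ u) \<longleftrightarrow> subseq [A,B,A,B] w" for A B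
    by (simp add: subseq_Cons_split) blast
  show ?thesis unfolding n_w_def e by simp
qed

lemma subseq_filter_iff: "(\<forall>a\<in>set xs. P a) \<Longrightarrow> subseq xs (filter P ys) \<longleftrightarrow> subseq xs ys"
proof (induction ys arbitrary: xs)
  case Nil then show ?case by simp
next
  case (Cons y ys)
  show ?case
  proof (cases xs)
    case Nil then show ?thesis by simp
  next
    case (Cons x xs')
    then show ?thesis using Cons.prems Cons.IH by auto
  qed
qed

lemma subseq_map_iff: "inj_on f (set xs \<union> set ys) \<Longrightarrow> subseq (map f xs) (map f ys) \<longleftrightarrow> subseq xs ys"
proof (induction ys arbitrary: xs)
  case Nil then show ?case by (cases xs) auto
next
  case (Cons y ys)
  show ?case
  proof (cases xs)
    case Nil then show ?thesis by simp
  next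
    case (Cons x xs')
    have i: "f x = f y \<longleftrightarrow> x = y" using inj_on_eq_iff[OF Cons.prems, of x y] Cons by auto
    have i1: "inj_on f (set xs' \<union> set ys)" using Cons.prems Cons by (auto intro: inj_on_subset)
    have i2: "inj_on f (set xs \<union> set ys)" using Cons.prems Cons by (auto intro: inj_on_subset)
    show ?thesis using Cons.IH[OF i1] Cons.IH[OF i2] Cons i by auto
  qed
qed

lemma n_w_local: "n_w w X Y = n_w (filter (\<lambda>c. c = X \<or> c = Y) w) X Y"
  unfolding n_w_subseq by (simp add: subseq_filter_iff)

lemma n_w_map: "inj_on f (set w \<union> {X, Y}) \<Longrightarrow> n_w (map f w) (f X) (f Y) = n_w w X Y"
proof -
  assume i: "inj_on f (set w \<union> {X, Y})"
  have "subseq (map f [X,Y,X,Y]) (map f w) = subseq [X,Y,X,Y] w"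
    by (rule subseq_map_iff, rule inj_on_subset[OF i]) auto
  moreover have "subseq (map f [Y,X,Y,X]) (map f w) = subseq [Y,X,Y,X] w"
    by (rule subseq_map_iff, rule inj_on_subset[OF i]) auto
  ultimately show ?thesis unfolding n_w_subseq by simp
qed

lemma n_w_range: "n_w w X Y \<in> {-1, 0, 1}"
  unfolding n_w_def by auto

lemma filter_rep: "X \<notin> set l \<Longrightarrow> filter (\<lambda>c. c = X \<or> c = D) l = replicate (count_list l D) D"
  by (induction l) auto

lemma filter_rep': "X \<notin> set l \<Longrightarrow> filter (\<lambda>c. c = D \<or> c = X) l = replicate (count_list l D) D"
  by (induction l) auto

lemma filter_eq_rep: "filter (\<lambda>c. c = X) w = replicate (count_list w X) X"
  by (induction w) auto

lemma n_w_self: "count_list w X = 2 \<Longrightarrow> n_w w X X = 0"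
proof -
  assume c: "count_list w X = 2"
  have "filter (\<lambda>c. c = X \<or> c = X) w = [X, X]"
    using filter_eq_rep[of X w] c by (simp add: numeral_2_eq_2)
  then show ?thesis by (subst n_w_local) (simp add: n_w_subseq)
qed

lemma n_w_rep:
  assumes "D \<noteq> X" "a + b + c = 2"
  shows "n_w (replicate a D @ X # replicate b D @ X # replicate c D) X D
           = (if b = 1 then if a = 0 then 1 else -1 else 0)"
    and "n_w (replicate a D @ X # replicate b D @ X # replicate c D) D X
           = (if b = 1 then if a = 0 then -1 else 1 else 0)"
proof -
  have "(a,b,c) \<in> {(0,0,2),(0,1,1),(0,2,0),(1,0,1),(1,1,0),(2,0,0)}" using assms(2) by auto
  then show "n_w (replicate a D @ X # replicate b D @ X # replicate c D) X D
           = (if b = 1 then if a = 0 then 1 else -1 else 0)"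
    and "n_w (replicate a D @ X # replicate b D @ X # replicate c D) D X
           = (if b = 1 then if a = 0 then -1 else 1 else 0)"
    using assms(1) by (auto simp: n_w_subseq numeral_2_eq_2)
qed


lemma (in group) sub_mult_iff_l:
  "subgroup K G \<Longrightarrow> a \<in> carrier G \<Longrightarrow> b \<in> carrier G \<Longrightarrow> a \<in> K \<Longrightarrow> (a \<otimes> b \<in> K \<longleftrightarrow> b \<in> K)"
proof -
  assume K: "subgroup K G" and a: "a \<in> carrier G" and b: "b \<in> carrier G" and aK: "a \<in> K"
  show ?thesis
  proof
    assume "a \<otimes> b \<in> K"
    then have "inv a \<otimes> (a \<otimes> b) \<in> K" using K aK by (simp add: subgroup.m_closed subgroup.m_inv_closed)
    moreover have "inv a \<otimes> (a \<otimes> b) = b" using a b by (metis l_inv l_one m_assoc inv_closed)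
    ultimately show "b \<in> K" by simp
  qed (use K aK in \<open>simp add: subgroup.m_closed\<close>)
qed

lemma (in group) sub_mult_iff_r:
  "subgroup K G \<Longrightarrow> a \<in> carrier G \<Longrightarrow> b \<in> carrier G \<Longrightarrow> b \<in> K \<Longrightarrow> (a \<otimes> b \<in> K \<longleftrightarrow> a \<in> K)"
proof -
  assume K: "subgroup K G" and a: "a \<in> carrier G" and b: "b \<in> carrier G" and bK: "b \<in> K"
  show ?thesis
  proof
    assume "a \<otimes> b \<in> K"
    then have "(a \<otimes> b) \<otimes> inv b \<in> K" using K bK by (simp add: subgroup.m_closed subgroup.m_inv_closed)
    moreover have "(a \<otimes> b) \<otimes> inv b = a" using a b by (metis r_inv r_one m_assoc inv_closed)
    ultimately show "a \<in> K" by simp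
  qed (use K bK in \<open>simp add: subgroup.m_closed\<close>)
qed

definition rep :: "'b set \<Rightarrow> ('b \<Rightarrow> 'a) \<Rightarrow> 'b list \<Rightarrow> 'b \<Rightarrow> ('a \<Rightarrow>\<^sub>0 int)" where
  "rep A p w X = (\<Sum>Y\<in>A. frag_cmul (n_w w X Y) (frag_of (p Y)))"

definition AHs where
  "AHs \<tau> H A p w = {X \<in> A. pi_class \<tau> (rep A p w X) \<in> H (p X)}"

lemma cov_simp: "covering \<tau> H (A, p, w) = (AHs \<tau> H A p w, p, filter (\<lambda>X. X \<in> AHs \<tau> H A p w) w)"
  by (simp add: covering_def letter_class_def rep_def AHs_def Let_def)

lemma count_filter: "P X \<Longrightarrow> count_list (filter P w) X = count_list w X"
  by (induction w) auto

lemma cov_nano: "is_nanoword N \<Longrightarrow> is_nanoword (covering \<tau> H N)"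
proof -
  assume n: "is_nanoword N"
  obtain A p w where N: "N = (A, p, w)" by (cases N) auto
  show ?thesis using n unfolding N cov_simp is_nanoword_def
    by (auto simp: AHs_def count_filter intro: finite_subset)
qed

lemma step_hom: "homotopy_step \<tau> P Q \<Longrightarrow> homotopic \<tau> P Q"
  unfolding homotopic_def by auto

lemma hom_refl: "homotopic \<tau> P P"
  unfolding homotopic_def by auto

lemma n_w_localS: "X \<in> S \<Longrightarrow> Y \<in> S \<Longrightarrow> n_w w X Y = n_w (filter (\<lambda>c. c \<in> S) w) X Y"
  unfolding n_w_subseq by (simp add: subseq_filter_iff)

lemma filter_none: "X \<notin> set l \<Longrightarrow> Y \<notin> set l \<Longrightarrow> filter (\<lambda>c. c = X \<or> c = Y) l = []"
  by (induction l) auto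

lemma filter_noneS: "\<forall>c\<in>S. c \<notin> set l \<Longrightarrow> filter (\<lambda>c. c \<in> S) l = []"
  by (induction l) auto

lemma filter_none3: "X \<notin> set l \<Longrightarrow> Y \<notin> set l \<Longrightarrow> Z \<notin> set l \<Longrightarrow> filter (\<lambda>c. c = X \<or> c = Y \<or> c = Z) l = []"
  by (induction l) auto

lemma sum2: "finite A \<Longrightarrow> X \<in> A \<Longrightarrow> Y \<in> A \<Longrightarrow> X \<noteq> Y \<Longrightarrow> sum f A = f X + f Y + sum f (A - {X, Y})"
proof -
  assume a: "finite A" "X \<in> A" "Y \<in> A" "X \<noteq> Y"
  have "sum f A = f X + sum f (A - {X})" using sum.remove[OF a(1,2)] .
  also have "sum f (A - {X}) = f Y + sum f (A - {X} - {Y})" using sum.remove[of "A - {X}" Y f] a by auto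
  also have "A - {X} - {Y} = A - {X, Y}" by auto
  finally show ?thesis by (simp add: add.assoc)
qed

lemma sum3: "finite A \<Longrightarrow> X \<in> A \<Longrightarrow> Y \<in> A \<Longrightarrow> Z \<in> A \<Longrightarrow> distinct [X, Y, Z] \<Longrightarrow>
   sum f A = f X + f Y + f Z + sum f (A - {X, Y, Z})"
proof -
  assume a: "finite A" "X \<in> A" "Y \<in> A" "Z \<in> A" "distinct [X, Y, Z]"
  have "sum f A = f X + f Y + sum f (A - {X, Y})" using sum2[of A X Y f] a by auto
  also have "sum f (A - {X, Y}) = f Z + sum f (A - {X, Y} - {Z})" using sum.remove[of "A - {X, Y}" Z f] a by auto
  also have "A - {X, Y} - {Z} = A - {X, Y, Z}" by auto
  finally show ?thesis by (simp add: add.assoc)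
qed

lemma iso_case:
  assumes nN: "is_nanoword (A, p, w)" and nM: "is_nanoword (A', p', w')"
    and iso: "nano_iso (A, p, w) (A', p', w')"
  shows "homotopic \<tau> (covering \<tau> H (A, p, w)) (covering \<tau> H (A', p', w'))"
proof -
  from iso obtain f where bij: "bij_betw f A A'" and pf: "\<forall>X\<in>A. p' (f X) = p X" and w': "w' = map f w"
    unfolding nano_iso_def by auto
  from nN have sw: "set w \<subseteq> A" unfolding is_nanoword_def by auto
  have inj: "inj_on f A" using bij bij_betw_def by blast
  have repf: "rep A' p' w' (f X) = rep A p w X" if X: "X \<in> A" for X
  proof -
    have "rep A' p' w' (f X) = (\<Sum>Y\<in>A. frag_cmul (n_w w' (f X) (f Y)) (frag_of (p' (f Y))))"
      unfolding rep_def using sum.reindex_bij_betw[OF bij, symmetric] by blast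
    also have "\<dots> = rep A p w X" unfolding rep_def
    proof (rule sum.cong)
      fix Y assume Y: "Y \<in> A"
      have "n_w w' (f X) (f Y) = n_w w X Y" unfolding w'
        by (rule n_w_map, rule inj_on_subset[OF inj]) (use sw X Y in auto)
      then show "frag_cmul (n_w w' (f X) (f Y)) (frag_of (p' (f Y))) = frag_cmul (n_w w X Y) (frag_of (p Y))"
        using pf Y by simp
    qed simp
    finally show ?thesis .
  qed
  have memf: "f X \<in> AHs \<tau> H A' p' w' \<longleftrightarrow> X \<in> AHs \<tau> H A p w" if X: "X \<in> A" for X
    using X repf[OF X] pf bij_betwE[OF bij] by (auto simp: AHs_def)
  have img: "f ` AHs \<tau> H A p w = AHs \<tau> H A' p' w'"
  proof
    show "f ` AHs \<tau> H A p w \<subseteq> AHs \<tau> H A' p' w'" using memf by (auto simp: AHs_def)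
    show "AHs \<tau> H A' p' w' \<subseteq> f ` AHs \<tau> H A p w"
    proof
      fix Y assume Y: "Y \<in> AHs \<tau> H A' p' w'"
      then have "Y \<in> A'" by (simp add: AHs_def)
      then obtain X where X: "X \<in> A" "Y = f X" using bij by (auto simp: bij_betw_def)
      then show "Y \<in> f ` AHs \<tau> H A p w" using memf[OF X(1)] Y by auto
    qed
  qed
  have bij2: "bij_betw f (AHs \<tau> H A p w) (AHs \<tau> H A' p' w')"
    by (rule bij_betw_subset[OF bij _ img]) (auto simp: AHs_def)
  have fl: "filter (\<lambda>X. X \<in> AHs \<tau> H A' p' w') w' = map f (filter (\<lambda>X. X \<in> AHs \<tau> H A p w) w)"
    unfolding w' filter_map
    by (rule arg_cong[where f="map f"], rule filter_cong) (use memf[unfolded w'] sw in auto)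
  have "nano_iso (covering \<tau> H (A, p, w)) (covering \<tau> H (A', p', w'))"
    unfolding cov_simp nano_iso_def using bij2 fl pf by (auto simp: AHs_def)
  then show ?thesis using cov_nano[OF nN] cov_nano[OF nM]
    by (intro step_hom) (simp add: homotopy_step_def)
qed

lemma move1_case:
  assumes fam: "alpha_family \<tau> H"
    and nN: "is_nanoword (A, p, x @ [X, X] @ y)" and nM: "is_nanoword (A - {X}, p, x @ y)"
  shows "homotopic \<tau> (covering \<tau> H (A, p, x @ [X, X] @ y)) (covering \<tau> H (A - {X}, p, x @ y))"
proof -
  define w where "w = x @ [X, X] @ y"
  from nN have fin: "finite A" and sw: "set w \<subseteq> A" and cnt: "\<And>U. U \<in> A \<Longrightarrow> count_list w U = 2"
    unfolding is_nanoword_def w_def by auto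
  have XA: "X \<in> A" using sw w_def by auto
  have Xx: "X \<notin> set x" "X \<notin> set y" using cnt[OF XA] by (auto simp: w_def count_list_0_iff[symmetric])
  have nX: "n_w w X U = 0 \<and> n_w w U X = 0" if U: "U \<in> A" for U
  proof (cases "U = X")
    case True thus ?thesis using n_w_self[OF cnt[OF U]] by simp
  next
    case False
    have c: "count_list x U + 0 + count_list y U = 2" using cnt[OF U] False by (simp add: w_def)
    have f1: "filter (\<lambda>c. c = X \<or> c = U) w = replicate (count_list x U) U @ X # replicate 0 U @ X # replicate (count_list y U) U"
      using Xx by (simp add: w_def filter_rep)
    have f2: "filter (\<lambda>c. c = U \<or> c = X) w = replicate (count_list x U) U @ X # replicate 0 U @ X # replicate (count_list y U) U"
      using Xx by (simp add: w_def filter_rep')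
    have "n_w w X U = 0" using n_w_local[of w X U] f1 n_w_rep(1)[OF False c] by simp
    moreover have "n_w w U X = 0" using n_w_local[of w U X] f2 n_w_rep(2)[OF False c] by simp
    ultimately show ?thesis by simp
  qed
  have nU: "n_w w U V = n_w (x @ y) U V" if "U \<noteq> X" "V \<noteq> X" for U V
  proof -
    have "filter (\<lambda>c. c = U \<or> c = V) w = filter (\<lambda>c. c = U \<or> c = V) (x @ y)"
      using that by (auto simp: w_def)
    then show ?thesis using n_w_local[of w U V] n_w_local[of "x @ y" U V] by simp
  qed
  have repX: "rep A p w X = 0"
  proof -
    have "rep A p w X = (\<Sum>Y\<in>A. 0)" unfolding rep_def by (rule sum.cong) (auto simp: nX)
    then show ?thesis by simp
  qed
  have repU: "rep (A - {X}) p (x @ y) U = rep A p w U" if U: "U \<in> A" "U \<noteq> X" for U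
  proof -
    have "rep A p w U = frag_cmul (n_w w U X) (frag_of (p X)) + rep (A - {X}) p w U"
      unfolding rep_def using sum.remove[OF fin XA] by blast
    also have "rep (A - {X}) p w U = rep (A - {X}) p (x @ y) U"
      unfolding rep_def by (rule sum.cong) (auto simp: nU U)
    finally show ?thesis using nX[OF U(1)] by simp
  qed
  have sub: "subgroup (H (p X)) (pi_group \<tau>)" using fam by (simp add: alpha_family_def)
  have XH: "X \<in> AHs \<tau> H A p w"
    using XA repX subgroup.one_closed[OF sub] by (simp add: AHs_def pi_class_zero)
  have AHM: "AHs \<tau> H (A - {X}) p (x @ y) = AHs \<tau> H A p w - {X}"
    using repU by (auto simp: AHs_def)
  define K where "K = AHs \<tau> H A p w"
  have fx: "filter (\<lambda>Z. Z \<in> K - {X}) x = filter (\<lambda>Z. Z \<in> K) x"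
    by (rule filter_cong) (use Xx in auto)
  have fy: "filter (\<lambda>Z. Z \<in> K - {X}) y = filter (\<lambda>Z. Z \<in> K) y"
    by (rule filter_cong) (use Xx in auto)
  have cN: "covering \<tau> H (A, p, w) = (K, p, filter (\<lambda>Z. Z \<in> K) x @ [X, X] @ filter (\<lambda>Z. Z \<in> K) y)"
    using XH by (simp add: cov_simp K_def w_def)
  have cM: "covering \<tau> H (A - {X}, p, x @ y) = (K - {X}, p, filter (\<lambda>Z. Z \<in> K) x @ filter (\<lambda>Z. Z \<in> K) y)"
    using fx fy by (simp add: cov_simp AHM K_def)
  have "homotopy_move \<tau> (covering \<tau> H (A, p, w)) (covering \<tau> H (A - {X}, p, x @ y))"
    unfolding cN cM by (rule homotopy_move.move1)
  then show ?thesis using cov_nano[OF nN] cov_nano[OF nM] unfolding w_def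
    by (intro step_hom) (simp add: homotopy_step_def)
qed


lemma move2_case:
  assumes inv: "\<And>a. \<tau> (\<tau> a) = a" and fam: "alpha_family \<tau> H" and pY: "p Y = \<tau> (p X)"
    and nN: "is_nanoword (A, p, x @ [X, Y] @ y @ [Y, X] @ z)" and nM: "is_nanoword (A - {X, Y}, p, x @ y @ z)"
  shows "homotopic \<tau> (covering \<tau> H (A, p, x @ [X, Y] @ y @ [Y, X] @ z)) (covering \<tau> H (A - {X, Y}, p, x @ y @ z))"
proof -
  define w where "w = x @ [X, Y] @ y @ [Y, X] @ z"
  from nN have fin: "finite A" and sw: "set w \<subseteq> A" and cnt: "\<And>U. U \<in> A \<Longrightarrow> count_list w U = 2"
    unfolding is_nanoword_def w_def by auto
  have XA: "X \<in> A" and YA: "Y \<in> A" using sw w_def by auto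
  have XY: "X \<noteq> Y"
  proof
    assume "X = Y" then have "count_list w X \<ge> 4" by (simp add: w_def)
    then show False using cnt[OF XA] by simp
  qed
  have Xx: "X \<notin> set x" "X \<notin> set y" "X \<notin> set z" using cnt[OF XA] XY by (auto simp: w_def count_list_0_iff[symmetric])
  have Yx: "Y \<notin> set x" "Y \<notin> set y" "Y \<notin> set z" using cnt[OF YA] XY by (auto simp: w_def count_list_0_iff[symmetric])
  have fXY: "filter (\<lambda>c. c = X \<or> c = Y) w = [X, Y, Y, X]" "filter (\<lambda>c. c = Y \<or> c = X) w = [X, Y, Y, X]"
    using Xx Yx XY by (simp_all add: w_def filter_none)
  have nXY: "n_w w X Y = 0" "n_w w Y X = 0"
    using n_w_local[of w X Y] n_w_local[of w Y X] fXY XY by (simp_all add: n_w_subseq)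
  have nXX: "n_w w X X = 0" "n_w w Y Y = 0" using n_w_self[OF cnt[OF XA]] n_w_self[OF cnt[OF YA]] by auto
  have nZ: "n_w w U X = n_w w U Y \<and> n_w w X U = n_w w Y U" if U: "U \<in> A" "U \<noteq> X" "U \<noteq> Y" for U
  proof -
    have c: "count_list x U + count_list y U + count_list z U = 2" using cnt[OF U(1)] U by (simp add: w_def)
    have f1: "filter (\<lambda>c. c = X \<or> c = U) w = replicate (count_list x U) U @ X # replicate (count_list y U) U @ X # replicate (count_list z U) U"
      using Xx Yx U XY by (simp add: w_def filter_rep)
    have f2: "filter (\<lambda>c. c = U \<or> c = X) w = replicate (count_list x U) U @ X # replicate (count_list y U) U @ X # replicate (count_list z U) U"
      using Xx Yx U XY by (simp add: w_def filter_rep')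
    have f3: "filter (\<lambda>c. c = Y \<or> c = U) w = replicate (count_list x U) U @ Y # replicate (count_list y U) U @ Y # replicate (count_list z U) U"
      using Xx Yx U XY by (simp add: w_def filter_rep)
    have f4: "filter (\<lambda>c. c = U \<or> c = Y) w = replicate (count_list x U) U @ Y # replicate (count_list y U) U @ Y # replicate (count_list z U) U"
      using Xx Yx U XY by (simp add: w_def filter_rep')
    show ?thesis
      using n_w_local[of w X U] n_w_local[of w U X] n_w_local[of w Y U] n_w_local[of w U Y] f1 f2 f3 f4
        n_w_rep[OF U(2) c] n_w_rep[OF U(3) c] by simp
  qed
  have nU: "n_w w U V = n_w (x @ y @ z) U V" if "U \<noteq> X" "V \<noteq> X" "U \<noteq> Y" "V \<noteq> Y" for U V
  proof -
    have "filter (\<lambda>c. c = U \<or> c = V) w = filter (\<lambda>c. c = U \<or> c = V) (x @ y @ z)"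
      using that by (auto simp: w_def)
    then show ?thesis using n_w_local[of w U V] n_w_local[of "x @ y @ z" U V] by simp
  qed
  have repXY: "rep A p w X = rep A p w Y" unfolding rep_def
  proof (rule sum.cong)
    fix V assume V: "V \<in> A"
    show "frag_cmul (n_w w X V) (frag_of (p V)) = frag_cmul (n_w w Y V) (frag_of (p V))"
      using nXY nXX nZ[OF V] by (cases "V = X"; cases "V = Y") auto
  qed simp
  have repU: "rep A p w U = frag_cmul (n_w w U X) (frag_of (p X) + frag_of (\<tau> (p X))) + rep (A - {X, Y}) p (x @ y @ z) U"
    if U: "U \<in> A" "U \<noteq> X" "U \<noteq> Y" for U
  proof -
    have "rep A p w U = frag_cmul (n_w w U X) (frag_of (p X)) + frag_cmul (n_w w U Y) (frag_of (p Y)) + rep (A - {X, Y}) p w U"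
      unfolding rep_def by (rule sum2[OF fin XA YA XY])
    also have "rep (A - {X, Y}) p w U = rep (A - {X, Y}) p (x @ y @ z) U"
      unfolding rep_def by (rule sum.cong) (auto simp: nU U)
    finally show ?thesis using nZ[OF U] pY by (simp add: frag_cmul_distrib2)
  qed
  have clsU: "pi_class \<tau> (rep A p w U) = pi_class \<tau> (rep (A - {X, Y}) p (x @ y @ z) U)"
    if U: "U \<in> A" "U \<noteq> X" "U \<noteq> Y" for U
    unfolding repU[OF U] by (rule pi_class_rel, rule rel_mem_cmul, rule n_w_range)
  have HXY: "H (p Y) = H (p X)" using fam pY by (simp add: alpha_family_def)
  have memXY: "X \<in> AHs \<tau> H A p w \<longleftrightarrow> Y \<in> AHs \<tau> H A p w"
    using XA YA repXY HXY by (simp add: AHs_def)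
  have AHM: "AHs \<tau> H (A - {X, Y}) p (x @ y @ z) = AHs \<tau> H A p w - {X, Y}"
    using clsU by (auto simp: AHs_def)
  define K where "K = AHs \<tau> H A p w"
  have fl: "filter (\<lambda>Z. Z \<in> K - {X, Y}) l = filter (\<lambda>Z. Z \<in> K) l" if "X \<notin> set l" "Y \<notin> set l" for l
    by (rule filter_cong) (use that in auto)
  show ?thesis
  proof (cases "X \<in> K")
    case True
    then have YK: "Y \<in> K" using memXY K_def by simp
    have cN: "covering \<tau> H (A, p, w) = (K, p, filter (\<lambda>Z. Z \<in> K) x @ [X, Y] @ filter (\<lambda>Z. Z \<in> K) y @ [Y, X] @ filter (\<lambda>Z. Z \<in> K) z)"
      using True YK by (simp add: cov_simp K_def w_def)
    have cM: "covering \<tau> H (A - {X, Y}, p, x @ y @ z) = (K - {X, Y}, p, filter (\<lambda>Z. Z \<in> K) x @ filter (\<lambda>Z. Z \<in> K) y @ filter (\<lambda>Z. Z \<in> K) z)"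
      using fl Xx Yx by (simp add: cov_simp AHM K_def)
    have "homotopy_move \<tau> (covering \<tau> H (A, p, w)) (covering \<tau> H (A - {X, Y}, p, x @ y @ z))"
      unfolding cN cM by (rule homotopy_move.move2, rule pY)
    then show ?thesis using cov_nano[OF nN] cov_nano[OF nM] unfolding w_def
      by (intro step_hom) (simp add: homotopy_step_def)
  next
    case False
    then have YK: "Y \<notin> K" using memXY K_def by simp
    have KM: "K - {X, Y} = K" using False YK by auto
    have cN: "covering \<tau> H (A, p, w) = (K, p, filter (\<lambda>Z. Z \<in> K) x @ filter (\<lambda>Z. Z \<in> K) y @ filter (\<lambda>Z. Z \<in> K) z)"
      using False YK by (simp add: cov_simp K_def w_def)
    have cM: "covering \<tau> H (A - {X, Y}, p, x @ y @ z) = (K, p, filter (\<lambda>Z. Z \<in> K) x @ filter (\<lambda>Z. Z \<in> K) y @ filter (\<lambda>Z. Z \<in> K) z)"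
      using KM by (simp add: cov_simp AHM K_def[symmetric])
    have "covering \<tau> H (A, p, w) = covering \<tau> H (A - {X, Y}, p, x @ y @ z)"
      using cN cM by simp
    then show ?thesis using hom_refl unfolding w_def by metis
  qed
qed


lemma filter_move3: "\<not> (P X \<and> P Y) \<Longrightarrow> \<not> (P X \<and> P Z) \<Longrightarrow> \<not> (P Y \<and> P Z) \<Longrightarrow>
  filter P (x @ [X, Y] @ y @ [X, Z] @ z @ [Y, Z] @ t) = filter P (x @ [Y, X] @ y @ [Z, X] @ z @ [Z, Y] @ t)"
  by (cases "P X"; cases "P Y"; cases "P Z") auto

lemma move3_case:
  assumes fam: "alpha_family \<tau> H" and d: "distinct [X, Y, Z]" and pXY: "p X = p Y" and pYZ: "p Y = p Z"
    and nN: "is_nanoword (A, p, x @ [X, Y] @ y @ [X, Z] @ z @ [Y, Z] @ t)"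
    and nM: "is_nanoword (A, p, x @ [Y, X] @ y @ [Z, X] @ z @ [Z, Y] @ t)"
  shows "homotopic \<tau> (covering \<tau> H (A, p, x @ [X, Y] @ y @ [X, Z] @ z @ [Y, Z] @ t))
                     (covering \<tau> H (A, p, x @ [Y, X] @ y @ [Z, X] @ z @ [Z, Y] @ t))"
proof -
  define w where "w = x @ [X, Y] @ y @ [X, Z] @ z @ [Y, Z] @ t"
  define w' where "w' = x @ [Y, X] @ y @ [Z, X] @ z @ [Z, Y] @ t"
  from nN have fin: "finite A" and sw: "set w \<subseteq> A" and cnt: "\<And>U. U \<in> A \<Longrightarrow> count_list w U = 2"
    unfolding is_nanoword_def w_def by auto
  from nM have cnt': "\<And>U. U \<in> A \<Longrightarrow> count_list w' U = 2"
    unfolding is_nanoword_def w'_def by auto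
  have XA: "X \<in> A" and YA: "Y \<in> A" and ZA: "Z \<in> A" using sw w_def by auto
  have Xx: "X \<notin> set x" "X \<notin> set y" "X \<notin> set z" "X \<notin> set t"
    using cnt[OF XA] d by (auto simp: w_def count_list_0_iff[symmetric])
  have Yx: "Y \<notin> set x" "Y \<notin> set y" "Y \<notin> set z" "Y \<notin> set t"
    using cnt[OF YA] d by (auto simp: w_def count_list_0_iff[symmetric])
  have Zx: "Z \<notin> set x" "Z \<notin> set y" "Z \<notin> set z" "Z \<notin> set t"
    using cnt[OF ZA] d by (auto simp: w_def count_list_0_iff[symmetric])
  define S where "S = {X, Y, Z}"
  have fS: "filter (\<lambda>c. c \<in> S) w = [X, Y, X, Z, Y, Z]" "filter (\<lambda>c. c \<in> S) w' = [Y, X, Z, X, Z, Y]"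
    using Xx Yx Zx by (simp_all add: w_def w'_def S_def filter_none3)
  have nS: "n_w w U V = n_w [X, Y, X, Z, Y, Z] U V" "n_w w' U V = n_w [Y, X, Z, X, Z, Y] U V"
    if "U \<in> S" "V \<in> S" for U V
    using n_w_localS[OF that, of w] n_w_localS[OF that, of w'] fS by simp_all
  have dd: "X \<noteq> Y" "X \<noteq> Z" "Y \<noteq> Z" "Y \<noteq> X" "Z \<noteq> X" "Z \<noteq> Y" using d by auto
  have vals:
    "n_w w X X = 0" "n_w w X Y = 1" "n_w w X Z = 0"
    "n_w w Y X = -1" "n_w w Y Y = 0" "n_w w Y Z = 1"
    "n_w w Z X = 0" "n_w w Z Y = -1" "n_w w Z Z = 0"
    "n_w w' X X = 0" "n_w w' X Y = 0" "n_w w' X Z = 1"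
    "n_w w' Y X = 0" "n_w w' Y Y = 0" "n_w w' Y Z = 0"
    "n_w w' Z X = -1" "n_w w' Z Y = 0" "n_w w' Z Z = 0"
    by (simp_all add: nS S_def) (simp_all add: n_w_subseq dd)
  have nO: "n_w w U V = n_w w' U V \<and> n_w w V U = n_w w' V U" if U: "U \<notin> S" for U V
  proof -
    have "filter (\<lambda>c. c = U \<or> c = V) w = filter (\<lambda>c. c = U \<or> c = V) w'"
      "filter (\<lambda>c. c = V \<or> c = U) w = filter (\<lambda>c. c = V \<or> c = U) w'"
      unfolding w_def w'_def by (rule filter_move3, use U d in \<open>auto simp: S_def\<close>)+
    then show ?thesis using n_w_local[of w U V] n_w_local[of w' U V] n_w_local[of w V U] n_w_local[of w' V U]
      by simp
  qed
  have nY: "n_w w Y D = n_w w X D + n_w w Z D" if D: "D \<in> A" "D \<notin> S" for D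
  proof -
    have DX: "D \<noteq> X" "D \<noteq> Y" "D \<noteq> Z" using D(2) by (auto simp: S_def)
    define a where "a = count_list x D"
    define b where "b = count_list y D"
    define c where "c = count_list z D"
    define e where "e = count_list t D"
    have s: "a + b + c + e = 2" using cnt[OF D(1)] DX by (simp add: w_def a_def b_def c_def e_def)
    have s1: "a + (b + c) + e = 2" "a + b + (c + e) = 2" "(a + b) + c + e = 2" using s by simp_all
    have f1: "filter (\<lambda>c. c = Y \<or> c = D) w = replicate a D @ Y # replicate (b + c) D @ Y # replicate e D"
      using Xx Yx Zx DX dd by (simp add: w_def filter_rep replicate_add a_def b_def c_def e_def)
    have f2: "filter (\<lambda>c. c = X \<or> c = D) w = replicate a D @ X # replicate b D @ X # replicate (c + e) D"
      using Xx Yx Zx DX dd by (simp add: w_def filter_rep replicate_add a_def b_def c_def e_def)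
    have f3: "filter (\<lambda>c. c = Z \<or> c = D) w = replicate (a + b) D @ Z # replicate c D @ Z # replicate e D"
      using Xx Yx Zx DX dd by (simp add: w_def filter_rep replicate_add a_def b_def c_def e_def)
    have "n_w w Y D = (if b + c = 1 then if a = 0 then 1 else -1 else 0)"
      using n_w_local[of w Y D] f1 n_w_rep(1)[OF DX(2) s1(1)] by simp
    moreover have "n_w w X D = (if b = 1 then if a = 0 then 1 else -1 else 0)"
      using n_w_local[of w X D] f2 n_w_rep(1)[OF DX(1) s1(2)] by simp
    moreover have "n_w w Z D = (if c = 1 then if a + b = 0 then 1 else -1 else 0)"
      using n_w_local[of w Z D] f3 n_w_rep(1)[OF DX(3) s1(3)] by simp
    ultimately show ?thesis using s by auto
  qed
  have dS: "distinct [X, Y, Z]" by fact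
  define R where "R = (\<lambda>v U. (\<Sum>V\<in>A - S. frag_cmul (n_w v U V) (frag_of (p V))))"
  have rexp: "rep A p v U = frag_cmul (n_w v U X) (frag_of (p X)) + frag_cmul (n_w v U Y) (frag_of (p X))
       + frag_cmul (n_w v U Z) (frag_of (p X)) + R v U" for v U
  proof -
    have "rep A p v U = frag_cmul (n_w v U X) (frag_of (p X)) + frag_cmul (n_w v U Y) (frag_of (p Y))
       + frag_cmul (n_w v U Z) (frag_of (p Z)) + R v U"
      unfolding rep_def R_def S_def by (rule sum3[OF fin XA YA ZA dS])
    then show ?thesis using pXY pYZ by simp
  qed
  have RR: "R w U = R w' U" if "U \<in> S" for U
    unfolding R_def by (rule sum.cong) (use nO in auto)
  have RY: "R w Y = R w X + R w Z"
    unfolding R_def by (simp add: nY sum.distrib[symmetric] frag_cmul_distrib)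
  have repS: "rep A p w U = rep A p w' U" if "U \<in> S" for U
    using that RR[OF that] unfolding S_def rexp by (auto simp: vals)
  have repO: "rep A p w U = rep A p w' U" if "U \<notin> S" for U
    unfolding rep_def by (rule sum.cong) (use nO[OF that] in auto)
  have repY: "rep A p w Y = rep A p w X + rep A p w Z"
    unfolding rexp RY by (simp add: vals algebra_simps)
  have AHeq: "AHs \<tau> H A p w' = AHs \<tau> H A p w"
    using repS repO unfolding AHs_def by metis
  define K where "K = AHs \<tau> H A p w"
  define G where "G = pi_group \<tau>"
  have grp: "group G" unfolding G_def by (rule pi_group_group)
  have sub: "subgroup (H (p X)) G" using fam by (simp add: alpha_family_def G_def)
  have cY: "pi_class \<tau> (rep A p w Y) = pi_class \<tau> (rep A p w X) \<otimes>\<^bsub>G\<^esub> pi_class \<tau> (rep A p w Z)"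
    unfolding repY G_def by (rule pi_class_add)
  have car: "pi_class \<tau> c \<in> carrier G" for c unfolding G_def by (rule pi_class_carrier)
  have mX: "X \<in> K \<longleftrightarrow> pi_class \<tau> (rep A p w X) \<in> H (p X)" using XA by (simp add: K_def AHs_def)
  have mY: "Y \<in> K \<longleftrightarrow> pi_class \<tau> (rep A p w Y) \<in> H (p X)" using YA pXY by (simp add: K_def AHs_def)
  have mZ: "Z \<in> K \<longleftrightarrow> pi_class \<tau> (rep A p w Z) \<in> H (p X)" using ZA pXY pYZ by (simp add: K_def AHs_def)
  have r1: "X \<in> K \<Longrightarrow> (Y \<in> K \<longleftrightarrow> Z \<in> K)"
    using group.sub_mult_iff_l[OF grp sub car car] mX mY mZ cY by simp
  have r2: "Z \<in> K \<Longrightarrow> (Y \<in> K \<longleftrightarrow> X \<in> K)"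
    using group.sub_mult_iff_r[OF grp sub car car] mX mY mZ cY by simp
  have cN: "covering \<tau> H (A, p, w) = (K, p, filter (\<lambda>V. V \<in> K) w)" by (simp add: cov_simp K_def)
  have cM: "covering \<tau> H (A, p, w') = (K, p, filter (\<lambda>V. V \<in> K) w')" by (simp add: cov_simp K_def AHeq)
  show ?thesis
  proof (cases "X \<in> K \<and> Y \<in> K \<and> Z \<in> K")
    case True
    have "homotopy_move \<tau> (K, p, filter (\<lambda>V. V \<in> K) w) (K, p, filter (\<lambda>V. V \<in> K) w')"
      unfolding w_def w'_def using True
        homotopy_move.move3[OF d pXY pYZ, where \<tau>=\<tau> and A=K and x="filter (\<lambda>V. V \<in> K) x"
          and y="filter (\<lambda>V. V \<in> K) y" and z="filter (\<lambda>V. V \<in> K) z" and t="filter (\<lambda>V. V \<in> K) t"]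
      by simp
    then have "homotopy_move \<tau> (covering \<tau> H (A, p, w)) (covering \<tau> H (A, p, w'))"
      using cN cM by simp
    then show ?thesis using cov_nano[OF nN] cov_nano[OF nM] unfolding w_def w'_def
      by (intro step_hom) (simp add: homotopy_step_def)
  next
    case False
    have "filter (\<lambda>V. V \<in> K) w = filter (\<lambda>V. V \<in> K) w'"
      unfolding w_def w'_def by (rule filter_move3) (use False r1 r2 in blast)+
    then have "covering \<tau> H (A, p, w) = covering \<tau> H (A, p, w')" using cN cM by simp
    then show ?thesis using hom_refl unfolding w_def w'_def by metis
  qed
qed


lemma move_case:
  assumes inv: "\<And>a. \<tau> (\<tau> a) = a" and fam: "alpha_family \<tau> H"
    and mv: "homotopy_move \<tau> P Q" and nP: "is_nanoword P" and nQ: "is_nanoword Q"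
  shows "homotopic \<tau> (covering \<tau> H P) (covering \<tau> H Q)"
  using mv
proof (cases rule: homotopy_move.cases)
  case (move1 A p x X y)
  then show ?thesis using move1_case[OF fam, of A p x X y] nP nQ by simp
next
  case (move2 p Y X A x y z)
  then show ?thesis using move2_case[OF inv fam, of p Y X A x y z] nP nQ by simp
next
  case (move3 X Y Z p A x y z t)
  then show ?thesis using move3_case[OF fam, of X Y Z p A x y z t] nP nQ by simp
qed

lemma one_step:
  assumes inv: "\<And>a. \<tau> (\<tau> a) = a" and fam: "alpha_family \<tau> H"
    and st: "homotopy_step \<tau> P Q"
  shows "homotopic \<tau> (covering \<tau> H P) (covering \<tau> H Q)"
proof -
  from st have nP: "is_nanoword P" and nQ: "is_nanoword Q" and c: "nano_iso P Q \<or> homotopy_move \<tau> P Q"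
    by (auto simp: homotopy_step_def)
  obtain A p w where P: "P = (A, p, w)" by (cases P) auto
  obtain A' p' w' where Q: "Q = (A', p', w')" by (cases Q) auto
  from c show ?thesis
  proof
    assume "nano_iso P Q"
    then show ?thesis using iso_case[of A p w A' p' w'] nP nQ P Q by simp
  next
    assume "homotopy_move \<tau> P Q"
    then show ?thesis using move_case[OF inv fam _ nP nQ] by blast
  qed
qed

lemma hom_sym: "homotopic \<tau> P Q \<Longrightarrow> homotopic \<tau> Q P"
proof -
  let ?R = "{(P, Q). homotopy_step \<tau> P Q} \<union> {(P, Q). homotopy_step \<tau> Q P}"
  assume "homotopic \<tau> P Q"
  then have "(P, Q) \<in> ?R\<^sup>*" by (simp add: homotopic_def)
  then have "(Q, P) \<in> (?R\<inverse>)\<^sup>*" by (rule rtrancl_converseI)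
  moreover have "?R\<inverse> = ?R" by auto
  ultimately have "(Q, P) \<in> ?R\<^sup>*" by metis
  then show ?thesis unfolding homotopic_def .
qed

lemma hom_trans: "homotopic \<tau> P Q \<Longrightarrow> homotopic \<tau> Q S \<Longrightarrow> homotopic \<tau> P S"
  unfolding homotopic_def by (rule rtrancl_trans)

theorem lemma5p1:
  fixes \<tau> :: "'a \<Rightarrow> 'a"
    and H :: "'a \<Rightarrow> ('a \<Rightarrow>\<^sub>0 int) set set"
    and N M :: "('b, 'a) nanoword"
  assumes "\<And>a. \<tau> (\<tau> a) = a"
    and "alpha_family \<tau> H"
    and "is_nanoword N" and "is_nanoword M"
    and "homotopic \<tau> N M"
  shows "homotopic \<tau> (covering \<tau> H N) (covering \<tau> H M)"
proof -
  let ?R = "{(P, Q). homotopy_step \<tau> P Q} \<union> {(P, Q). homotopy_step \<tau> Q P}"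
  have "(N, M) \<in> ?R\<^sup>*" using assms(5) by (simp add: homotopic_def)
  then show ?thesis
  proof (induction rule: rtrancl_induct)
    case base
    then show ?case by (rule hom_refl)
  next
    case (step P Q)
    from step.hyps(2) have "homotopic \<tau> (covering \<tau> H P) (covering \<tau> H Q)"
      using one_step[OF assms(1,2)] hom_sym by blast
    then show ?case using step.IH hom_trans by blast
  qed
qed

end
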